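(* Let $f:\mathbb{R}^n\to\mathbb{R}$ be differentiable, $L$-smooth and $m$-strongly convex ($0<m\le L$), with unique minimizer $x_*$ (so $\nabla f(x_* )=0$). Let $0<\mu<2$, $\delta>0$, $\alpha>0$, and let constants $0<c_1\le c_2<+\infty$ be given. Consider the adaptive fractional order gradient descent (AFOGD) iteration, started from $x_0,x_1\in\mathbb{R}^n$, $$x_{k+1}=x_k-\alpha\,\nabla f(x_k)\,\beta_k\,(\|x_k-x_{k-1}\|_2+\delta)^{1-\mu},$$ where the scalars $\beta_k>0$ are chosen so that $0<c_1\le \beta_k(\|x_k-x_{k-1}\|_2+\delta)^{1-\mu}\le c_2<+\infty$ for all $k$. Write it as the dynamical system $\xi_{k+1}=A\xi_k+Bu_k$, $y_k=C\xi_k$, $x_k=E\xi_k$ with $\xi_k=x_k$, $A=I_n$, $B=-\alpha I_n$, $C=I_n$, $E=I_n$ and input $u_k=\nabla f(x_k)\,\beta_k(\|x_k-x_{k-1}\|_2+\delta)^{1-\mu}$. Suppose: 1. there are fixed points $\xi_*,u_*,y_*$ with $\xi_*=A\xi_*+Bu_*$, $y_*=C\xi_*$, $u_*=\nabla f(y_* )\cdot(\text{the corresponding scaling})$ and $x_*=E\xi_*=y_*$; 2. there exists a symmetric matrix $N\in\mathbb{R}^{2n\times 2n}$ such that $e_k^\top N e_k\ge 0$ for all $k$, where $e_k=[(\xi_k-\xi_* )^\top,(u_k-u_* )^\top]^\top$; 3. there exist a constant $h\ge 0$, a constant $\rho\in(0,1)$, and a positive definite matrix $P$ (with the given $\alpha>0$)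 such that $M+hN\preceq 0$, where $$M=\begin{bmatrix}A^\top PA-\rho^2P & A^\top PB\\ B^\top PA & B^\top PB\end{bmatrix}.$$ Then the sequence $\{x_k\}$ converges $R$-linearly to $x_*$.
   Context: A differentiable $f$ is $L$-smooth if $\|\nabla f(x)-\nabla f(y)\|_2\le L\|x-y\|_2$ for all $x,y$, and $m$-strongly convex if $m\|x-y\|_2^2\le (x-y)^\top(\nabla f(x)-\nabla f(y))$ for all $x,y$. A sequence $\{x_k\}$ converges $R$-linearly to $x_*$ with rate $\rho\in(0,1)$ if there is a constant $c>0$ with $\|x_k-x_*\|_2\le c\rho^k$ for all $k\in\mathbb{N}_+$. $I_n$ is the $n\times n$ identity matrix; $\preceq 0$ means negative semidefinite. *)

theory Defs
  imports "HOL-Analysis.Analysis"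
begin

definition L_smooth :: "real \<Rightarrow> ('a::real_inner \<Rightarrow> 'a) \<Rightarrow> bool" where
  "L_smooth L g \<longleftrightarrow> (\<forall>x y. norm (g x - g y) \<le> L * norm (x - y))"

definition strongly_convex_grad :: "real \<Rightarrow> ('a::real_inner \<Rightarrow> 'a) \<Rightarrow> bool" where
  "strongly_convex_grad m g \<longleftrightarrow> (\<forall>x y. m * (norm (x - y))\<^sup>2 \<le> (x - y) \<bullet> (g x - g y))"

definition blockmat ::
  "real^'n^'n \<Rightarrow> real^'m^'n \<Rightarrow> real^'n^'m \<Rightarrow> real^'m^'m \<Rightarrow> real^('n + 'm)^('n + 'm)" where
  "blockmat M11 M12 M21 M22 =
     (\<chi> i j. case i of
        Inl a \<Rightarrow> (case j of Inl b \<Rightarrow> M11 $ a $ b | Inr b \<Rightarrow> M12 $ a $ b)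
      | Inr a \<Rightarrow> (case j of Inl b \<Rightarrow> M21 $ a $ b | Inr b \<Rightarrow> M22 $ a $ b))"

definition stackvec :: "real^'n \<Rightarrow> real^'m \<Rightarrow> real^('n + 'm)" where
  "stackvec v w = (\<chi> i. case i of Inl a \<Rightarrow> v $ a | Inr b \<Rightarrow> w $ b)"

definition symmetric_mat :: "real^'n^'n \<Rightarrow> bool" where
  "symmetric_mat P \<longleftrightarrow> transpose P = P"

definition pos_def_mat :: "real^'n^'n \<Rightarrow> bool" where
  "pos_def_mat P \<longleftrightarrow> symmetric_mat P \<and> (\<forall>z. z \<noteq> 0 \<longrightarrow> z \<bullet> (P *v z) > 0)"

definition neg_semidef_mat :: "real^'n^'n \<Rightarrow> bool" where
  "neg_semidef_mat Q \<longleftrightarrow> (\<forall>z. z \<bullet> (Q *v z) \<le> 0)"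

end

theory Submission
  imports Defs
begin

lemma sum_plus_univ: "(\<Sum>i\<in>(UNIV::('a::finite + 'b::finite) set). g i) = (\<Sum>a\<in>UNIV. g (Inl a)) + (\<Sum>b\<in>UNIV. g (Inr b))"
proof -
  have "(UNIV::('a + 'b) set) = range Inl \<union> range Inr" by (metis UNIV_Plus_UNIV Plus_def)
  then show ?thesis
  proof -
    have "sum g (range Inl \<union> range Inr) = sum g (range Inl) + sum g (range Inr)"
      by (rule sum.union_disjoint) auto
    also have "sum g (range Inl) = (\<Sum>a\<in>UNIV. g (Inl a))" by (simp add: sum.reindex)
    also have "sum g (range Inr) = (\<Sum>a\<in>UNIV. g (Inr a))" by (simp add: sum.reindex)
    finally show ?thesis using \<open>UNIV = _\<close> by simp
  qed
qed

lemma block_quad: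
  fixes v :: "real^'n" and w :: "real^'m"
  shows "stackvec v w \<bullet> (blockmat M11 M12 M21 M22 *v stackvec v w)
     = v \<bullet> (M11 *v v) + v \<bullet> (M12 *v w) + w \<bullet> (M21 *v v) + w \<bullet> (M22 *v w)"
  unfolding inner_vec_def matrix_vector_mult_def stackvec_def blockmat_def
  by (simp add: sum_plus_univ sum.distrib sum_distrib_left algebra_simps)

lemma mv1: "(transpose (mat 1) ** P ** mat 1 - r *\<^sub>R P) *v (v::real^'n) = P *v v - r *\<^sub>R (P *v v)"
  by (simp add: matrix_vector_mult_diff_rdistrib scaleR_matrix_vector_assoc)
lemma smat: "(M::real^'n^'n) ** (c *\<^sub>R mat 1) = c *\<^sub>R M"
  by (simp add: matrix_matrix_mult_def mat_def vec_eq_iff if_distrib[of "\<lambda>x. _ * x"] if_distrib[of "\<lambda>x. x * _"] cong: if_cong)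
lemma smat2: "(c *\<^sub>R mat 1) ** (M::real^'n^'n) = c *\<^sub>R M"
  by (simp add: matrix_matrix_mult_def mat_def vec_eq_iff if_distrib[of "\<lambda>x. _ * x"] if_distrib[of "\<lambda>x. x * _"] cong: if_cong)
lemma negmv: "(- (M::real^'n^'m)) *v v = - (M *v v)"
  by (simp add: vec_eq_iff matrix_vector_mult_def sum_negf)
lemma smv: "(c *\<^sub>R (M::real^'n^'n)) *v v = c *\<^sub>R (M *v v)"
  by (simp add: scaleR_matrix_vector_assoc)
lemma mv2: "(transpose (mat 1) ** (P::real^'n^'n) ** (- a *\<^sub>R mat 1)) *v (v::real^'n) = - a *\<^sub>R (P *v v)"
  by (simp only: transpose_mat matrix_mul_lid smat smv)
lemma mv3: "(transpose (- a *\<^sub>R mat 1) ** (P::real^'n^'n) ** (mat 1)) *v (v::real^'n) = - a *\<^sub>R (P *v v)"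
  by (simp only: transpose_scalar transpose_mat matrix_mul_rid smat2 smv)
lemma mv4: "(transpose (- a *\<^sub>R mat 1) ** (P::real^'n^'n) ** (- a *\<^sub>R mat 1)) *v (v::real^'n) = a^2 *\<^sub>R (P *v v)"
  by (simp only: transpose_scalar transpose_mat smat2 smat smv scaleR_scaleR power2_eq_square mult_minus_left mult_minus_right minus_minus)

lemma pd_bound:
  assumes "pos_def_mat (P::real^'n^'n)"
  shows "\<exists>lam>0. \<forall>z. lam * (norm z)^2 \<le> z \<bullet> (P *v z)"
proof -
  let ?f = "\<lambda>z. z \<bullet> (P *v z)"
  have cont: "continuous_on (sphere 0 1) ?f"
    by (intro continuous_intros continuous_on_id linear_continuous_on bounded_linear_inner_right matrix_vector_mul_bounded_linear)
  have ne: "sphere (0::real^'n) 1 \<noteq> {}" by simp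
  obtain z0 where z0: "z0 \<in> sphere 0 1" "\<forall>y\<in>sphere 0 1. ?f z0 \<le> ?f y"
    using continuous_attains_inf[OF compact_sphere ne cont] by blast
  have "z0 \<noteq> 0" using z0(1) by (metis mem_sphere_0 norm_zero zero_neq_one)
  then have pos: "?f z0 > 0" using assms unfolding pos_def_mat_def by auto
  have "?f z0 * (norm z)^2 \<le> ?f z" for z
  proof (cases "z = 0")
    case True then show ?thesis by simp
  next
    case False
    let ?y = "inverse (norm z) *\<^sub>R z"
    have "?y \<in> sphere 0 1" using False by simp
    then have "?f z0 \<le> ?f ?y" using z0(2) by blast
    also have "?f ?y = inverse (norm z)^2 * ?f z"
      by (simp add: matrix_vector_mult_scaleR power2_eq_square)
    finally have "?f z0 * (norm z)^2 \<le> inverse (norm z)^2 * ?f z * (norm z)^2"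
      by (simp add: mult_right_mono)
    also have "\<dots> = ?f z" using False by (simp add: field_simps)
    finally show ?thesis .
  qed
  then show ?thesis using pos by (metis mult.commute)
qed

lemma quad_step: "(a - c *\<^sub>R b) \<bullet> ((P::real^'n^'n) *v (a - c *\<^sub>R b))
  = a \<bullet> (P *v a) - c * (a \<bullet> (P *v b)) - c * (b \<bullet> (P *v a)) + c^2 * (b \<bullet> (P *v b))"
  by (simp add: matrix_vector_mult_diff_distrib matrix_vector_mult_scaleR inner_diff_left inner_diff_right power2_eq_square algebra_simps)


theorem theorem1:
  fixes f :: "real^'n \<Rightarrow> real" and grad :: "real^'n \<Rightarrow> real^'n"
    and L m \<mu> \<delta> \<alpha> c1 c2 h \<rho> :: real
    and x :: "nat \<Rightarrow> real^'n" and \<beta> :: "nat \<Rightarrow> real"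
    and xs \<xi>s us ys :: "real^'n"
    and A B C E P :: "real^'n^'n"
    and N :: "real^('n + 'n)^('n + 'n)"
  assumes grad: "\<forall>z. (f has_derivative (\<lambda>v. grad z \<bullet> v)) (at z)"
    and smooth: "L_smooth L grad"
    and sconv: "strongly_convex_grad m grad"
    and mL: "0 < m" "m \<le> L"
    and xs_min: "\<forall>y. f xs \<le> f y"
    and \<mu>: "0 < \<mu>" "\<mu> < 2"
    and \<delta>: "\<delta> > 0"
    and \<alpha>: "\<alpha> > 0"
    and c12: "0 < c1" "c1 \<le> c2"
    and \<beta>_pos: "\<forall>k\<ge>1. \<beta> k > 0"
    and \<beta>_bnd: "\<forall>k\<ge>1. c1 \<le> \<beta> k * (norm (x k - x (k - 1)) + \<delta>) powr (1 - \<mu>)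
                       \<and> \<beta> k * (norm (x k - x (k - 1)) + \<delta>) powr (1 - \<mu>) \<le> c2"
    and iter: "\<forall>k\<ge>1. x (Suc k) = x k - \<alpha> *\<^sub>R
                   ((\<beta> k * (norm (x k - x (k - 1)) + \<delta>) powr (1 - \<mu>)) *\<^sub>R grad (x k))"
    and ABCE: "A = mat 1" "B = - \<alpha> *\<^sub>R mat 1" "C = mat 1" "E = mat 1"
    and fixpt: "\<xi>s = A *v \<xi>s + B *v us" "ys = C *v \<xi>s"
               "\<exists>s. us = s *\<^sub>R grad ys" "xs = E *v \<xi>s" "xs = ys"
    and N_sym: "symmetric_mat N"
    and N_iqc: "\<forall>k\<ge>1. let e = stackvec (x k - \<xi>s)
                     ((\<beta> k * (norm (x k - x (k - 1)) + \<delta>) powr (1 - \<mu>)) *\<^sub>R grad (x k) - us)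
                   in e \<bullet> (N *v e) \<ge> 0"
    and h: "h \<ge> 0"
    and \<rho>: "0 < \<rho>" "\<rho> < 1"
    and P: "pos_def_mat P"
    and LMI: "neg_semidef_mat
               (blockmat (transpose A ** P ** A - \<rho>\<^sup>2 *\<^sub>R P) (transpose A ** P ** B)
                         (transpose B ** P ** A) (transpose B ** P ** B) + h *\<^sub>R N)"
  shows "\<exists>c>0. \<forall>k\<ge>1. norm (x k - xs) \<le> c * \<rho> ^ k"
proof -
  have us0: "us = 0"
  proof -
    have "\<xi>s = \<xi>s + (- \<alpha>) *\<^sub>R us" using fixpt(1) ABCE by (simp add: smv negmv)
    then have "\<alpha> *\<^sub>R us = 0" by simp
    then show ?thesis using \<alpha> by simp
  qed
  have xs\<xi>: "xs = \<xi>s" using fixpt(4) ABCE by simp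
  define s where "s k = \<beta> k * (norm (x k - x (k - 1)) + \<delta>) powr (1 - \<mu>)" for k
  define d where "d k = x k - xs" for k
  define u where "u k = s k *\<^sub>R grad (x k)" for k
  define Q where "Q z = z \<bullet> (P *v z)" for z
  have dstep: "d (Suc k) = d k - \<alpha> *\<^sub>R u k" if "k \<ge> 1" for k
    using iter that unfolding d_def u_def s_def by simp
  have Qstep: "Q (d (Suc k)) \<le> \<rho>^2 * Q (d k)" if k1: "k \<ge> 1" for k
  proof -
    define e where "e = stackvec (d k) (u k)"
    have Nk: "e \<bullet> (N *v e) \<ge> 0"
      using N_iqc k1 unfolding e_def d_def u_def s_def Let_def us0 xs\<xi> by simp
    let ?Mb = "blockmat (transpose A ** P ** A - \<rho>\<^sup>2 *\<^sub>R P) (transpose A ** P ** B)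
                         (transpose B ** P ** A) (transpose B ** P ** B)"
    have "e \<bullet> ((?Mb + h *\<^sub>R N) *v e) \<le> 0" using LMI unfolding neg_semidef_mat_def by blast
    then have "e \<bullet> (?Mb *v e) + h * (e \<bullet> (N *v e)) \<le> 0"
      by (simp add: matrix_vector_mult_add_rdistrib smv inner_add_right)
    moreover have "h * (e \<bullet> (N *v e)) \<ge> 0" using h Nk by simp
    ultimately have le: "e \<bullet> (?Mb *v e) \<le> 0" by linarith
    have "e \<bullet> (?Mb *v e) = Q (d k) - \<rho>^2 * Q (d k) - \<alpha> * (d k \<bullet> (P *v u k)) - \<alpha> * (u k \<bullet> (P *v d k)) + \<alpha>^2 * Q (u k)"
      unfolding e_def block_quad ABCE mv1 mv2 mv3 mv4 Q_def
      by (simp add: inner_diff_right algebra_simps)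
    moreover have "Q (d (Suc k)) = Q (d k) - \<alpha> * (d k \<bullet> (P *v u k)) - \<alpha> * (u k \<bullet> (P *v d k)) + \<alpha>^2 * Q (u k)"
      unfolding dstep[OF k1] Q_def quad_step ..
    ultimately show ?thesis using le by linarith
  qed
  have Qk: "Q (d k) \<le> \<rho>^(2*(k-1)) * Q (d 1)" if "k \<ge> 1" for k
    using that
  proof (induction k rule: dec_induct)
    case base then show ?case by simp
  next
    case (step k)
    have "Q (d (Suc k)) \<le> \<rho>^2 * Q (d k)" using Qstep step(1) by simp
    also have "\<dots> \<le> \<rho>^2 * (\<rho>^(2*(k-1)) * Q (d 1))"
      using step(3) by (simp add: mult_left_mono)
    also have "\<dots> = \<rho>^(2*(Suc k - 1)) * Q (d 1)"
    proof -
      have "2*(Suc k - 1) = 2 + 2*(k-1)" using step(1) by simp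
      then show ?thesis by (simp only: power_add mult.assoc)
    qed
    finally show ?case .
  qed
  obtain lam where lam: "lam > 0" "\<forall>z. lam * (norm z)^2 \<le> Q z"
    using pd_bound[OF P] unfolding Q_def by blast
  have Q1: "Q (d 1) \<ge> 0" using lam by (metis mult_nonneg_nonneg less_imp_le zero_le_power2 order_trans)
  define c0 where "c0 = sqrt (Q (d 1) / lam)"
  have c0: "c0 \<ge> 0" unfolding c0_def using Q1 lam by simp
  have bnd: "norm (d k) \<le> c0 * \<rho>^(k-1)" if "k \<ge> 1" for k
  proof -
    have "lam * (norm (d k))^2 \<le> \<rho>^(2*(k-1)) * Q (d 1)" using lam(2) Qk[OF that] order_trans by blast
    then have "(norm (d k))^2 \<le> \<rho>^(2*(k-1)) * Q (d 1) / lam" using lam(1) by (simp add: field_simps)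
    also have "\<dots> = (c0 * \<rho>^(k-1))^2" unfolding c0_def using Q1 lam(1)
      by (simp add: power_mult_distrib power_mult[symmetric] mult.commute)
    finally show ?thesis using c0 \<rho> by (meson power2_le_imp_le mult_nonneg_nonneg zero_le_power less_imp_le)
  qed
  show ?thesis
  proof (intro exI[of _ "c0 / \<rho> + 1"] conjI allI impI)
    show "c0 / \<rho> + 1 > 0" using c0 \<rho> by (simp add: add_nonneg_pos)
    fix k :: nat assume k: "k \<ge> 1"
    have "norm (x k - xs) \<le> c0 * \<rho>^(k-1)" using bnd[OF k] unfolding d_def .
    also have "\<dots> = c0 / \<rho> * \<rho>^k" using \<rho> k
      by (metis Suc_diff_le diff_Suc_1 nonzero_mult_div_cancel_left power_Suc times_divide_eq_left less_irrefl order.strict_iff_not mult.commute)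
    also have "\<dots> \<le> (c0 / \<rho> + 1) * \<rho>^k" using \<rho> by (simp add: distrib_right)
    finally show "norm (x k - xs) \<le> (c0 / \<rho> + 1) * \<rho>^k" .
  qed
qed

end
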